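(* Let $m>0$, $\gamma>0$, $c_k=k^{-(1+\alpha\beta)}$, $\lambda_k=k^{-\beta}$ ($k\geq1$), with $\alpha>1$, $\beta>\frac1{\alpha-1}$ and $\frac12<s<\frac{(\alpha-1)\beta}2$. Let $\Phi\in C^\infty(\mathbb{R})$ satisfy $\int_{\mathbb{R}}|\Phi'|e^{-\Phi}dx<\infty$ and $b(\Phi(x)+1)\geq x^2$ for some $b>0$ and all $x$. For $N\in\mathbb{N}$ define $\Theta(\cdot;s,N):\mathcal{H}_{-s}\to\mathbb{R}$ by $$\Theta(X;s,N)=\frac1m\Phi(x)+\frac12v^2+\frac1{2m}\sum_{k=1}^Nz_k^2+\frac12\sum_{k>N}k^{-2s}z_k^2.$$ Then there exists $N=N(m,\gamma,\alpha,\beta,s)\in\mathbb{N}$ sufficiently large such that, for some $a>0$, $\Theta(X):=\Theta(X;s,N)$ satisfies $$\sup_{X\in\mathcal{H}_{-s}}\mathcal{L}\Theta(X)\leq a.$$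
   Context: $\mathcal{H}_{-s}$ is the Hilbert space of real sequences $X=(x,v,z_1,z_2,\dots)$ with $\|X\|_{-s}^2=x^2+v^2+\sum_{k\geq1}k^{-2s}z_k^2<\infty$. For smooth $\varphi$, $\mathcal L\varphi(X)=v\partial_x\varphi+\big(-\tfrac\gamma mv-\tfrac1m\Phi'(x)-\tfrac1m\sum_{k\geq1}\sqrt{c_k}z_k\big)\partial_v\varphi+\sum_{k\geq1}(-\lambda_kz_k+\sqrt{c_k}v)\partial_{z_k}\varphi+\tfrac{\gamma}{m^2}\partial_v^2\varphi+\sum_{k\geq1}\lambda_k\partial_{z_k}^2\varphi$, the generator of the system $dx=v\,dt$, $m\,dv=(-\gamma v-\Phi'(x)-\sum_k\sqrt{c_k}z_k)dt+\sqrt{2\gamma}dW_0$, $dz_k=(-\lambda_kz_k+\sqrt{c_k}v)dt+\sqrt{2\lambda_k}dW_k$. *)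

theory Defs
  imports "HOL-Analysis.Analysis"
begin

text \<open>A point X = (x, v, z) of H_{-s}; the coordinates z_k (k \<ge> 1) are z k,
  the value z 0 is unused.\<close>
type_synonym state = "real \<times> real \<times> (nat \<Rightarrow> real)"

definition Hs :: "real \<Rightarrow> state set" where
  "Hs r = {X. summable (\<lambda>k. real (Suc k) powr (- (2*r)) * (snd (snd X) (Suc k))\<^sup>2)}"

definition gen :: "real \<Rightarrow> real \<Rightarrow> (real \<Rightarrow> real) \<Rightarrow> (nat \<Rightarrow> real) \<Rightarrow> (nat \<Rightarrow> real)
    \<Rightarrow> (state \<Rightarrow> real) \<Rightarrow> state \<Rightarrow> real" where
  "gen m \<gamma> \<Phi> c lam \<phi> X = (case X of (x, v, z) \<Rightarrow>
     v * deriv (\<lambda>t. \<phi> (t, v, z)) x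
   + (- \<gamma> / m * v - deriv \<Phi> x / m - (1/m) * (\<Sum>k. sqrt (c (Suc k)) * z (Suc k)))
       * deriv (\<lambda>t. \<phi> (x, t, z)) v
   + (\<Sum>k. (- lam (Suc k) * z (Suc k) + sqrt (c (Suc k)) * v)
            * deriv (\<lambda>t. \<phi> (x, v, z(Suc k := t))) (z (Suc k)))
   + \<gamma> / m\<^sup>2 * deriv (deriv (\<lambda>t. \<phi> (x, t, z))) v
   + (\<Sum>k. lam (Suc k) * deriv (deriv (\<lambda>t. \<phi> (x, v, z(Suc k := t)))) (z (Suc k))))"

definition Theta :: "real \<Rightarrow> (real \<Rightarrow> real) \<Rightarrow> real \<Rightarrow> nat \<Rightarrow> state \<Rightarrow> real" where
  "Theta m \<Phi> r N X = (case X of (x, v, z) \<Rightarrow>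
     \<Phi> x / m + v\<^sup>2 / 2 + (1 / (2*m)) * (\<Sum>k\<in>{1..N}. (z k)\<^sup>2)
     + (1/2) * (\<Sum>k. if Suc k > N then real (Suc k) powr (- (2*r)) * (z (Suc k))\<^sup>2 else 0))"

end

theory Submission
  imports Defs "HOL-Analysis.Analysis"
begin


lemma summable_Suc_powr:
  assumes "p < -1" shows "summable (\<lambda>k. real (Suc k) powr p)"
proof -
  have "summable (\<lambda>n. real n powr p)" using assms summable_real_powr_iff by blast
  then show ?thesis using summable_Suc_iff[of "\<lambda>n. real n powr p"] by simp
qed

lemma deriv_quad: "deriv (\<lambda>t::real. A + W * t\<^sup>2 / 2) = (\<lambda>t. W * t)"
proof
  fix t :: real
  have "((\<lambda>t::real. A + W * t\<^sup>2 / 2) has_real_derivative W * t) (at t)"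
    by (auto intro!: derivative_eq_intros simp: power2_eq_square)
  then show "deriv (\<lambda>t::real. A + W * t\<^sup>2 / 2) t = W * t" by (rule DERIV_imp_deriv)
qed

lemma deriv_lin: "deriv (\<lambda>t::real. W * t) y = W"
  by (rule DERIV_imp_deriv) (auto intro!: derivative_eq_intros)

lemma Theta_upd:
  assumes sm: "summable (\<lambda>k. real (Suc k) powr (- (2*r)) * (z (Suc k))\<^sup>2)"
  shows "Theta m \<Phi> r N (x, v, z(Suc k := t)) = Theta m \<Phi> r N (x, v, z(Suc k := 0))
     + (if Suc k \<le> N then 1/m else real (Suc k) powr (-(2*r))) * t\<^sup>2 / 2"
proof -
  have fs: "(\<Sum>j\<in>{1..N}. ((z(Suc k := t)) j)\<^sup>2) = (\<Sum>j\<in>{1..N}. ((z(Suc k := 0)) j)\<^sup>2)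
      + (if Suc k \<le> N then t\<^sup>2 else 0)"
  proof -
    have "(\<Sum>j\<in>{1..N}. ((z(Suc k := t)) j)\<^sup>2) = (\<Sum>j\<in>{1..N}. (if j = Suc k then t\<^sup>2 else 0) + ((z(Suc k := 0)) j)\<^sup>2)"
      by (rule sum.cong) auto
    also have "\<dots> = (\<Sum>j\<in>{1..N}. ((z(Suc k := 0)) j)\<^sup>2) + (if Suc k \<le> N then t\<^sup>2 else 0)"
      by (simp add: sum.distrib)
    finally show ?thesis .
  qed
  define f0 where "f0 = (\<lambda>j. if Suc j > N then real (Suc j) powr (- (2*r)) * ((z(Suc k := 0)) (Suc j))\<^sup>2 else 0)"
  have s0: "summable f0"
  proof (rule summable_comparison_test'[OF sm])
    fix j show "norm (f0 j) \<le> real (Suc j) powr (- (2*r)) * (z (Suc j))\<^sup>2"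
      by (auto simp: f0_def)
  qed
  have eq: "(\<lambda>j. if Suc j > N then real (Suc j) powr (- (2*r)) * ((z(Suc k := t)) (Suc j))\<^sup>2 else 0)
     = (\<lambda>j. (if j = k then (if Suc k > N then real (Suc k) powr (- (2*r)) * t\<^sup>2 else 0) else 0) + f0 j)"
    by (auto simp: f0_def)
  have ss: "(\<lambda>j. if j = k then (if Suc k > N then real (Suc k) powr (- (2*r)) * t\<^sup>2 else 0) else 0)
       sums (if Suc k > N then real (Suc k) powr (- (2*r)) * t\<^sup>2 else 0)"
    using sums_single[of k "\<lambda>_. (if Suc k > N then real (Suc k) powr (- (2*r)) * t\<^sup>2 else 0)"] by simp
  have si: "(\<Sum>j. if Suc j > N then real (Suc j) powr (- (2*r)) * ((z(Suc k := t)) (Suc j))\<^sup>2 else 0)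
     = (if Suc k > N then real (Suc k) powr (- (2*r)) * t\<^sup>2 else 0) + suminf f0"
    unfolding eq using sums_unique[OF sums_add[OF ss summable_sums[OF s0]]] by simp
  have si0: "(\<Sum>j. if Suc j > N then real (Suc j) powr (- (2*r)) * ((z(Suc k := 0)) (Suc j))\<^sup>2 else 0)
     = suminf f0" unfolding f0_def by simp
  show ?thesis
    unfolding Theta_def using fs si si0
    apply (simp only: prod.case fs si si0)
    apply (simp add: fs si si0 field_simps)
    apply (auto simp: add_divide_distrib)
    done
qed


lemma powr_np_le1: fixes x e :: real assumes "1 \<le> x" "e \<le> 0" shows "x powr e \<le> 1"
  using powr_mono[OF assms(2) assms(1)] assms(1) by simp

lemma quad_bound:
  fixes \<mu> B y :: real assumes "\<mu> > 0"
  shows "- \<mu> * y\<^sup>2 + B * y \<le> B\<^sup>2 / (4 * \<mu>)"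
proof -
  have "0 \<le> (2*\<mu>*y - B)\<^sup>2" by simp
  hence "4*\<mu>*(B*y - \<mu>*y\<^sup>2) \<le> B\<^sup>2" by (simp add: power2_eq_square algebra_simps)
  thus ?thesis using assms by (simp add: field_simps)
qed

lemma amgm_abs: fixes x y :: real shows "\<bar>x * y\<bar> \<le> (x\<^sup>2 + y\<^sup>2) / 2"
proof -
  have "0 \<le> (\<bar>x\<bar> - \<bar>y\<bar>)\<^sup>2" by simp
  thus ?thesis by (simp add: power2_eq_square algebra_simps abs_mult)
qed

lemma sqrt_powr_bound:
  fixes n ee ss zz :: real assumes "n > 0"
  shows "\<bar>sqrt (n powr ee) * zz\<bar> \<le> (n powr (ee + 2 * ss) + n powr (-(2 * ss)) * zz\<^sup>2) / 2"
proof -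
  define p where "p = n powr ss"
  have p: "p > 0" using assms by (simp add: p_def)
  have e1: "sqrt (n powr ee) * zz = (sqrt (n powr ee) * p) * (zz / p)" using p by simp
  have e2: "(sqrt (n powr ee) * p)\<^sup>2 = n powr (ee + 2 * ss)"
  proof -
    have "(sqrt (n powr ee) * p)\<^sup>2 = (sqrt (n powr ee))\<^sup>2 * p * p" by (simp add: power2_eq_square)
    also have "\<dots> = n powr ee * (n powr ss * n powr ss)" by (simp add: p_def)
    also have "\<dots> = n powr (ee + 2 * ss)" by (simp add: powr_add[symmetric])
    finally show ?thesis .
  qed
  have e3: "(zz / p)\<^sup>2 = n powr (-(2 * ss)) * zz\<^sup>2"
  proof -
    have "n powr (2 * ss) = n powr ss * n powr ss" by (simp add: powr_add[symmetric])
    hence "n powr (-(2 * ss)) = 1 / (p * p)" unfolding powr_minus p_def by (simp add: divide_inverse)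
    thus ?thesis by (simp only: power_divide power2_eq_square) simp
  qed
  have "\<bar>(sqrt (n powr ee) * p) * (zz / p)\<bar> \<le> ((sqrt (n powr ee) * p)\<^sup>2 + (zz / p)\<^sup>2) / 2"
    by (rule amgm_abs)
  then show ?thesis unfolding e2 e3 e1[symmetric] .
qed



theorem proposition5p3:
  fixes m \<gamma> \<alpha> \<beta> s b :: real and \<Phi> :: "real \<Rightarrow> real"
  assumes "m > 0" "\<gamma> > 0" "\<alpha> > 1" "\<beta> > 1 / (\<alpha> - 1)"
    and "1/2 < s" "s < (\<alpha> - 1) * \<beta> / 2"
    and "\<forall>n x. ((deriv ^^ n) \<Phi>) differentiable (at x)"
    and "integrable lborel (\<lambda>x. \<bar>deriv \<Phi> x\<bar> * exp (- \<Phi> x))"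
    and "b > 0" "\<forall>x. b * (\<Phi> x + 1) \<ge> x\<^sup>2"
  shows "\<exists>N::nat. \<exists>a>0. \<forall>X\<in>Hs s.
     gen m \<gamma> \<Phi> (\<lambda>k. real k powr (-(1 + \<alpha>*\<beta>))) (\<lambda>k. real k powr (-\<beta>))
         (Theta m \<Phi> s N) X \<le> a"
proof -
  note m = assms(1) and g = assms(2)
  have bpos: "\<beta> > 0" using assms(3,4) by (smt (verit) divide_pos_pos)
  define \<delta> where "\<delta> = (\<alpha> - 1) * \<beta> - 2 * s"
  have dpos: "\<delta> > 0" using assms(6) by (simp add: \<delta>_def)
  have ab: "\<alpha> * \<beta> > 2 * s" using assms(6) bpos by (simp add: algebra_simps)
  define K where "K = (1 + 1/m)\<^sup>2 / 4"
  define h where "h = (\<lambda>k. K * real (Suc k) powr (-1 - \<delta>))"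
  have hs: "summable h" unfolding h_def
    by (rule summable_mult) (rule summable_Suc_powr, use dpos in simp)
  have hnn: "\<And>k. h k \<ge> 0" by (simp add: h_def K_def)
  obtain N where hN: "\<forall>n\<ge>N. norm (\<Sum>i. h (i + n)) < \<gamma> / m"
    using suminf_exist_split[OF _ hs, of "\<gamma>/m"] m g by auto
  define cc where "cc = (\<lambda>k. real k powr (-(1 + \<alpha>*\<beta>)))"
  define ll where "ll = (\<lambda>k. real k powr (-\<beta>))"
  define W where "W = (\<lambda>n::nat. if n \<le> N then 1/m else real n powr (-(2 * s)))"
  define P5 where "P5 = (\<Sum>k. ll (Suc k) * W (Suc k))"
  define a where "a = \<gamma> / m\<^sup>2 + \<bar>P5\<bar> + 1"
  have apos: "a > 0" unfolding a_def using m g by (simp add: add_pos_nonneg)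
  have main: "gen m \<gamma> \<Phi> cc ll (Theta m \<Phi> s N) (x, v, z) \<le> a" if X: "(x, v, z) \<in> Hs s" for x v z
  proof -
    have sm: "summable (\<lambda>k. real (Suc k) powr (- (2 * s)) * (z (Suc k))\<^sup>2)"
      using X by (simp add: Hs_def)

    define \<zeta> where "\<zeta> = (\<lambda>k. z (Suc k))"
    define ak where "ak = (\<lambda>k. sqrt (cc (Suc k)))"
    have dPhi: "(\<Phi> has_real_derivative deriv \<Phi> x) (at x)"
      using assms(7) DERIV_deriv_iff_real_differentiable by (metis funpow_0)
    have d1: "deriv (\<lambda>t. Theta m \<Phi> s N (t, v, z)) x = deriv \<Phi> x / m"
    proof (rule DERIV_imp_deriv)
      have e: "(\<lambda>t. Theta m \<Phi> s N (t, v, z)) = (\<lambda>t. \<Phi> t / m + (Theta m \<Phi> s N (x, v, z) - \<Phi> x / m))"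
        by (auto simp: Theta_def)
      show "((\<lambda>t. Theta m \<Phi> s N (t, v, z)) has_real_derivative deriv \<Phi> x / m) (at x)"
        unfolding e using m by (auto intro!: derivative_eq_intros dPhi)
    qed
    have d2: "deriv (\<lambda>t. Theta m \<Phi> s N (x, t, z)) = (\<lambda>t. 1 * t)"
    proof -
      have e: "(\<lambda>t. Theta m \<Phi> s N (x, t, z)) = (\<lambda>t. (Theta m \<Phi> s N (x, 0, z)) + 1 * t\<^sup>2 / 2)"
        by (auto simp: Theta_def)
      show ?thesis unfolding e by (rule deriv_quad)
    qed
    have d4: "deriv (\<lambda>t. Theta m \<Phi> s N (x, v, z(Suc k := t))) = (\<lambda>t. W (Suc k) * t)" for k
    proof -
      have e: "(\<lambda>t. Theta m \<Phi> s N (x, v, z(Suc k := t))) = (\<lambda>t. Theta m \<Phi> s N (x, v, z(Suc k := 0)) + W (Suc k) * t\<^sup>2 / 2)"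
        by (rule ext, subst Theta_upd[OF sm], simp only: W_def)
      show ?thesis unfolding e by (rule deriv_quad)
    qed
    define S1 where "S1 = (\<Sum>k. ak k * \<zeta> k)"
    define P3 where "P3 = (\<Sum>k. (- ll (Suc k) * \<zeta> k + ak k * v) * (W (Suc k) * \<zeta> k))"
    have genE: "gen m \<gamma> \<Phi> cc ll (Theta m \<Phi> s N) (x, v, z) =
       v * (deriv \<Phi> x / m) + (- \<gamma> / m * v - deriv \<Phi> x / m - (1/m) * S1) * (1 * v) + P3 + \<gamma> / m\<^sup>2 * 1 + P5"
      unfolding gen_def prod.case d1 d2 d4 deriv_lin S1_def P3_def P5_def \<zeta>_def ak_def ..


    have sm': "summable (\<lambda>k. real (Suc k) powr (- (2 * s)) * (\<zeta> k)\<^sup>2)"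
      using sm by (simp add: \<zeta>_def)
    have nat1: "real (Suc k) \<ge> 1" for k by simp
    have Mab: "summable (\<lambda>k. (real (Suc k) powr (-(1 + \<alpha>*\<beta>) + 2 * s) + real (Suc k) powr (-(2 * s)) * (\<zeta> k)\<^sup>2) / 2)"
      by (intro summable_divide summable_add summable_Suc_powr sm') (use ab in simp)
    have bnd_a: "\<bar>ak k * \<zeta> k\<bar> \<le> (real (Suc k) powr (-(1 + \<alpha>*\<beta>) + 2 * s) + real (Suc k) powr (-(2 * s)) * (\<zeta> k)\<^sup>2) / 2" for k
      unfolding ak_def cc_def by (rule sqrt_powr_bound) simp
    have sa: "summable (\<lambda>k. ak k * \<zeta> k)"
      by (rule summable_comparison_test'[OF Mab, of 0]) (use bnd_a in simp)
    have Wk: "W (Suc k) = real (Suc k) powr (-(2 * s))" "0 < W (Suc k)" "W (Suc k) \<le> 1" if "k \<ge> N" for k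
    proof -
      show "W (Suc k) = real (Suc k) powr (-(2 * s))" using that by (simp add: W_def)
      then show "0 < W (Suc k)" by simp
      show "W (Suc k) \<le> 1" using \<open>W (Suc k) = _\<close> assms(5) by (simp add: powr_np_le1)
    qed
    have llk: "0 < ll (Suc k)" "ll (Suc k) \<le> 1" for k
      unfolding ll_def using bpos by (auto intro!: powr_np_le1)
    have sq: "summable (\<lambda>k. ll (Suc k) * W (Suc k) * (\<zeta> k)\<^sup>2)"
    proof (rule summable_comparison_test'[OF sm', of N])
      fix k assume "k \<ge> N"
      show "norm (ll (Suc k) * W (Suc k) * (\<zeta> k)\<^sup>2) \<le> real (Suc k) powr (- (2 * s)) * (\<zeta> k)\<^sup>2"
        using Wk[OF \<open>k \<ge> N\<close>] llk[of k] by (simp add: abs_mult mult_left_le_one_le)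
    qed
    have sr: "summable (\<lambda>k. ak k * W (Suc k) * \<zeta> k)"
    proof (rule summable_comparison_test'[OF Mab, of N])
      fix k assume "k \<ge> N"
      have "norm (ak k * W (Suc k) * \<zeta> k) = W (Suc k) * \<bar>ak k * \<zeta> k\<bar>"
        using Wk[OF \<open>k \<ge> N\<close>] by (simp add: abs_mult)
      also have "\<dots> \<le> \<bar>ak k * \<zeta> k\<bar>" using Wk[OF \<open>k \<ge> N\<close>] by (simp add: mult_left_le_one_le)
      finally show "norm (ak k * W (Suc k) * \<zeta> k) \<le> (real (Suc k) powr (-(1 + \<alpha>*\<beta>) + 2 * s) + real (Suc k) powr (-(2 * s)) * (\<zeta> k)\<^sup>2) / 2"
        using bnd_a[of k] by linarith
    qed
    define T where "T = (\<lambda>k. (- ll (Suc k) * \<zeta> k + ak k * v) * (W (Suc k) * \<zeta> k) - v / m * (ak k * \<zeta> k))"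
    have eT: "(\<lambda>k. (- ll (Suc k) * \<zeta> k + ak k * v) * (W (Suc k) * \<zeta> k)) = (\<lambda>k. v * (ak k * W (Suc k) * \<zeta> k) - ll (Suc k) * W (Suc k) * (\<zeta> k)\<^sup>2)"
      by (auto simp: algebra_simps power2_eq_square)
    have s3: "summable (\<lambda>k. (- ll (Suc k) * \<zeta> k + ak k * v) * (W (Suc k) * \<zeta> k))"
      unfolding eT by (intro summable_diff summable_mult sq sr)
    have s4: "summable (\<lambda>k. v / m * (ak k * \<zeta> k))" by (intro summable_mult sa)
    have sT: "summable T" unfolding T_def by (intro summable_diff s3 s4)
    have PT: "P3 - v / m * S1 = suminf T"
      unfolding T_def P3_def S1_def
      using suminf_diff[OF s3 s4] suminf_mult[OF sa, of "v/m"] by simp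
    define H where "H = (\<lambda>k. if N \<le> k then h k else 0)"
    have Hsum: "H sums (\<Sum>i. h (i + N))"
    proof -
      have "(\<lambda>i. H (i + N)) sums (\<Sum>i. h (i + N))"
        unfolding H_def using summable_ignore_initial_segment[OF hs, of N] by (simp add: summable_sums)
      thus ?thesis using sums_zero_iff_shift[of N H] by (simp add: H_def)
    qed
    have Hle: "(\<Sum>i. h (i + N)) < \<gamma> / m"
      using hN[rule_format, of N] by simp
    have Tle: "T k \<le> v\<^sup>2 * H k" for k
    proof (cases "N \<le> k")
      case False
      hence "W (Suc k) = 1/m" by (simp add: W_def)
      hence "T k = - (ll (Suc k) * (\<zeta> k)\<^sup>2) / m" unfolding T_def by (simp add: algebra_simps power2_eq_square)
      also have "\<dots> \<le> 0" using llk[of k] m by simp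
      finally show ?thesis using False by (simp add: H_def)
    next
      case True
      define n where "n = real (Suc k)"
      have n0: "n > 0" by (simp add: n_def)
      define \<mu> where "\<mu> = ll (Suc k) * W (Suc k)"
      have \<mu>0: "\<mu> > 0" unfolding \<mu>_def using Wk[OF True] llk[of k] by simp
      define B where "B = v * ak k * (W (Suc k) - 1/m)"
      have "T k = - \<mu> * (\<zeta> k)\<^sup>2 + B * \<zeta> k"
        unfolding T_def \<mu>_def B_def by (simp add: algebra_simps power2_eq_square)
      also have "\<dots> \<le> B\<^sup>2 / (4 * \<mu>)" by (rule quad_bound[OF \<mu>0])
      also have "B\<^sup>2 / (4 * \<mu>) = v\<^sup>2 * (W (Suc k) - 1/m)\<^sup>2 * (cc (Suc k) / \<mu>) / 4"
        unfolding B_def ak_def using \<mu>0 by (simp add: power_mult_distrib cc_def mult_ac)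
      also have "cc (Suc k) / \<mu> = n powr (-1 - \<delta>)"
      proof -
        have "\<mu> = n powr (-\<beta> + -(2 * s))" unfolding \<mu>_def ll_def Wk(1)[OF True] n_def by (simp add: powr_add[symmetric])
        hence "cc (Suc k) / \<mu> = n powr (-(1 + \<alpha>*\<beta>) - (-\<beta> + -(2 * s)))"
          unfolding cc_def n_def by (simp add: powr_diff)
        also have "-(1 + \<alpha>*\<beta>) - (-\<beta> + -(2 * s)) = -1 - \<delta>" unfolding \<delta>_def by (simp add: algebra_simps)
        finally show ?thesis .
      qed
      also have "v\<^sup>2 * (W (Suc k) - 1/m)\<^sup>2 * n powr (-1 - \<delta>) / 4 \<le> v\<^sup>2 * H k"
      proof -
        have "\<bar>W (Suc k) - 1/m\<bar> \<le> 1 + 1/m" proof -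
          have "0 < W (Suc k)" "W (Suc k) \<le> 1" "0 < 1/m" using Wk[OF True] m by auto
          thus ?thesis unfolding abs_le_iff by linarith
        qed
        hence w2: "(W (Suc k) - 1/m)\<^sup>2 \<le> (1 + 1/m)\<^sup>2"
          by (metis abs_le_square_iff abs_of_nonneg less_imp_le m add_nonneg_nonneg zero_le_one divide_nonneg_nonneg)
        have "(W (Suc k) - 1/m)\<^sup>2 * n powr (-1 - \<delta>) / 4 \<le> (1 + 1/m)\<^sup>2 * n powr (-1 - \<delta>) / 4"
          using w2 by (intro divide_right_mono mult_right_mono) auto
        also have "\<dots> = H k" using True by (simp add: H_def h_def K_def n_def)
        finally show ?thesis by (metis mult.assoc mult_left_mono zero_le_power2 times_divide_eq_right)
      qed
      finally show ?thesis .
    qed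
    have "suminf T \<le> suminf (\<lambda>k. v\<^sup>2 * H k)"
      by (rule suminf_le[OF Tle sT]) (intro summable_mult sums_summable[OF Hsum])
    also have "\<dots> = v\<^sup>2 * (\<Sum>i. h (i + N))" using Hsum sums_unique sums_mult by (metis sums_unique)
    also have "\<dots> \<le> v\<^sup>2 * (\<gamma> / m)" using Hle by (intro mult_left_mono) auto
    finally have sTle: "suminf T \<le> v\<^sup>2 * (\<gamma> / m)" .
    have "gen m \<gamma> \<Phi> cc ll (Theta m \<Phi> s N) (x, v, z) = - \<gamma> / m * v\<^sup>2 + (P3 - v / m * S1) + \<gamma> / m\<^sup>2 + P5"
      unfolding genE by (simp add: algebra_simps power2_eq_square)
    also have "\<dots> \<le> \<gamma> / m\<^sup>2 + \<bar>P5\<bar>" using PT sTle by (simp add: algebra_simps)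
    finally show ?thesis unfolding a_def by simp
  qed
  show ?thesis
    apply (rule exI[of _ N], rule exI[of _ a])
    using apos main unfolding cc_def ll_def by auto
qed

end
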